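(* Let $P,K:\mathbb{N}_0\to\mathbb{N}_0$ be a scaling with $\lim_{n\to\infty}K_n^2/P_n=0$, and let $p:\mathbb{N}_0\to[0,1]$ satisfy $p_n\sim 1-q(\theta_n)$. Then $$\frac{C_{\rm K}(\theta_n)}{p_n}\sim 1+\frac{P_n}{K_n^3}.$$
   Context: For positive integers $K\le P$, $\theta=(K,P)$: $q(\theta)=\binom{P-K}{K}/\binom{P}{K}$ if $2K\le P$ and $0$ otherwise; $r(\theta)=\binom{P-2K}{K}/\binom{P}{K}$ if $3K\le P$ and $0$ otherwise; $\beta(\theta)=(1-q)^3+q^3-qr$; $C_{\rm K}(\theta)=\beta(\theta)/(1-q(\theta))^2$ is the clustering coefficient $\mathbb{P}[E_{12}\mid E_{13}\cap E_{23}]$ of the random key graph (nodes receive i.i.d. uniform $K$-subsets of $\{1,\dots,P\}$, adjacent iff subsets intersect). $p_n$ equals the clustering coefficient $C_{\rm ER}(p_n)$ of the Erdős–Rényi graph $\mathbb{G}(n;p_n)$. A scaling is a pair $P,K:\mathbb{N}_0\to\mathbb{N}_0$ with $1\le K_n\le P_n$, and $\theta_n=(K_n,P_n)$; $a_n\sim b_n$ means $a_n/b_n\to1$. *)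

theory Defs
  imports "HOL-Analysis.Analysis" "HOL-Library.Landau_Symbols"
begin

definition qK :: "nat \<Rightarrow> nat \<Rightarrow> real" where
  "qK K P = (if 2 * K \<le> P then real ((P - K) choose K) / real (P choose K) else 0)"

definition rK :: "nat \<Rightarrow> nat \<Rightarrow> real" where
  "rK K P = (if 3 * K \<le> P then real ((P - 2 * K) choose K) / real (P choose K) else 0)"

definition betaK :: "nat \<Rightarrow> nat \<Rightarrow> real" where
  "betaK K P = (1 - qK K P) ^ 3 + (qK K P) ^ 3 - qK K P * rK K P"

definition CK :: "nat \<Rightarrow> nat \<Rightarrow> real" where
  "CK K P = betaK K P / (1 - qK K P) ^ 2"

end

theory Submission imports Defs begin

lemma binom_real: "real (n choose k) = (\<Prod>i<k. real n - real i) / fact k"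
  by (simp add: binomial_gbinomial gbinomial_prod_rev atLeast0LessThan)

lemma binom_ratio:
  assumes "m + K \<le> P"
  shows "real ((P - m) choose K) / real (P choose K) = (\<Prod>i<K. 1 - real m / (real P - real i))"
proof -
  have nz: "\<And>i. i < K \<Longrightarrow> real P - real i \<noteq> 0" using assms by auto
  have "real ((P - m) choose K) / real (P choose K)
     = (\<Prod>i<K. real (P - m) - real i) / (\<Prod>i<K. real P - real i)"
    by (simp add: binom_real)
  also have "\<dots> = (\<Prod>i<K. (real (P - m) - real i) / (real P - real i))"
    by (simp add: prod_dividef)
  also have "\<dots> = (\<Prod>i<K. 1 - real m / (real P - real i))"
    by (rule prod.cong) (use assms nz in \<open>auto simp: field_simps of_nat_diff\<close>)
  finally show ?thesis .
qed

lemma prod_lower: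
  fixes x :: "nat \<Rightarrow> real"
  assumes "finite A" "\<And>i. i \<in> A \<Longrightarrow> 0 \<le> x i \<and> x i \<le> 1"
  shows "1 - sum x A \<le> (\<Prod>i\<in>A. 1 - x i)"
  using assms
proof (induction A rule: finite_induct)
  case (insert a A)
  have h: "1 - sum x A \<le> (\<Prod>i\<in>A. 1 - x i)" using insert by auto
  have p0: "0 \<le> (\<Prod>i\<in>A. 1 - x i)" using insert by (auto intro: prod_nonneg)
  have p1: "(\<Prod>i\<in>A. 1 - x i) \<le> 1" using insert by (auto intro!: prod_le_1)
  have xa: "0 \<le> x a" "x a \<le> 1" using insert by auto
  have s0: "0 \<le> sum x A" using insert by (auto intro: sum_nonneg)
  have "1 - sum x (insert a A) = (1 - sum x A) - x a" using insert by simp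
  also have "\<dots> \<le> (1 - x a) * (\<Prod>i\<in>A. 1 - x i)"
  proof -
    have "(1 - x a) * (1 - sum x A) \<le> (1 - x a) * (\<Prod>i\<in>A. 1 - x i)"
      using h xa by (intro mult_left_mono) auto
    moreover have "(1 - sum x A) - x a \<le> (1 - x a) * (1 - sum x A)"
      using xa s0 by (simp add: algebra_simps)
    ultimately show ?thesis by linarith
  qed
  finally show ?case using insert by simp
qed simp

lemma prod_upper_exp:
  fixes x :: "nat \<Rightarrow> real"
  assumes "finite A" "\<And>i. i \<in> A \<Longrightarrow> 0 \<le> 1 + x i"
  shows "(\<Prod>i\<in>A. 1 + x i) \<le> exp (sum x A)"
proof -
  have "(\<Prod>i\<in>A. 1 + x i) \<le> (\<Prod>i\<in>A. exp (x i))"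
    by (rule prod_mono) (use assms in auto)
  thus ?thesis by (simp add: exp_sum assms)
qed

lemma prod_lower_plus:
  fixes x :: "nat \<Rightarrow> real"
  assumes "finite A" "\<And>i. i \<in> A \<Longrightarrow> 0 \<le> x i"
  shows "1 + sum x A \<le> (\<Prod>i\<in>A. 1 + x i)"
  using assms
proof (induction A rule: finite_induct)
  case (insert a A)
  have h: "1 + sum x A \<le> (\<Prod>i\<in>A. 1 + x i)" using insert by auto
  have xa: "0 \<le> x a" using insert by auto
  have s0: "0 \<le> sum x A" using insert by (auto intro: sum_nonneg)
  have "1 + sum x (insert a A) = (1 + sum x A) + x a" using insert by simp
  also have "\<dots> \<le> (1 + x a) * (1 + sum x A)" using xa s0 by (simp add: algebra_simps)
  also have "\<dots> \<le> (1 + x a) * (\<Prod>i\<in>A. 1 + x i)" using h xa by (simp add: mult_left_mono)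
  finally show ?case using insert by simp
qed simp

lemma exp_le_inv: "0 \<le> (t::real) \<Longrightarrow> t < 1 \<Longrightarrow> exp t \<le> 1 / (1 - t)"
proof -
  assume t: "0 \<le> t" "t < 1"
  have "1 - t \<le> exp (-t)" using exp_ge_add_one_self[of "-t"] by simp
  hence "exp t * (1 - t) \<le> exp t * exp (-t)" by simp
  hence "exp t * (1 - t) \<le> 1" by (simp add: exp_minus)
  thus ?thesis using t by (simp add: field_simps)
qed

lemma expneg_le_inv: "0 \<le> (t::real) \<Longrightarrow> exp (-t) \<le> 1 / (1 + t)"
proof -
  assume t: "0 \<le> t"
  have "1 + t \<le> exp t" by simp
  hence "exp (-t) * (1 + t) \<le> exp (-t) * exp t" by simp
  hence "exp (-t) * (1 + t) \<le> 1" by (simp add: exp_minus)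
  thus ?thesis using t by (simp add: field_simps)
qed


lemma qK_prod: "2 * K \<le> P \<Longrightarrow> qK K P = (\<Prod>i<K. 1 - real K / (real P - real i))"
  using binom_ratio[of K K P] by (simp add: qK_def)

lemma rK_prod: "3 * K \<le> P \<Longrightarrow> rK K P = (\<Prod>i<K. 1 - 2 * real K / (real P - real i))"
  using binom_ratio[of "2*K" K P] by (simp add: rK_def)

lemma a_bounds:
  assumes "1 \<le> K" "5 * K \<le> P" "i < K"
  shows "real K / real P \<le> real K / (real P - real i)"
    "real K / (real P - real i) \<le> real K / (real P - real K)"
    "0 < real P - real i" "0 < real P - real K"
    "real K / (real P - real K) < 1/3"
proof -
  have P: "real i < real K" "5 * real K \<le> real P" "1 \<le> real K" using assms by auto
  show "0 < real P - real i" "0 < real P - real K" using P by auto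
  show "real K / real P \<le> real K / (real P - real i)"
    using P by (intro divide_left_mono) auto
  show "real K / (real P - real i) \<le> real K / (real P - real K)"
    using P by (intro divide_left_mono) auto
  show "real K / (real P - real K) < 1/3" using P by (simp add: field_simps)
qed


lemma pointwise:
  fixes K P :: nat and t D E M :: real
  assumes K1: "1 \<le> K" and KP: "5 * K \<le> P"
    and t_def: "t = real K / real P" and D_def: "D = real K ^ 2 / real P"
    and E_def: "E = real K ^ 3 / real P ^ 2" and M_def: "M = 1 / ((1 - t) * (1 - 3 * t))"
    and EM: "E * M < 1"
  shows "D / (1 + D / (1 - t)) \<le> 1 - qK K P" "1 - qK K P \<le> D / (1 - t)"
    "1 - 2 * (D / (1 - t)) \<le> (qK K P ^ 2 - rK K P) / E"
    "(qK K P ^ 2 - rK K P) / E \<le> M / (1 - E * M)"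
proof -
  define a where "a i = real K / (real P - real i)" for i
  have ab: "\<And>i. i < K \<Longrightarrow> t \<le> a i \<and> a i \<le> t / (1 - t) \<and> t / (1 - t) < 1/3"
  proof -
    fix i assume i: "i < K"
    have Pp: "real P > 0" using K1 KP by auto
    have e: "real K / (real P - real K) = t / (1 - t)"
      using Pp K1 KP unfolding t_def by (simp add: field_simps)
    show "t \<le> a i \<and> a i \<le> t / (1 - t) \<and> t / (1 - t) < 1/3"
      using a_bounds[OF K1 KP i] e unfolding a_def t_def by auto
  qed
  have t0: "0 < t" and t5: "t \<le> 1/5" using K1 KP unfolding t_def by (auto simp: field_simps)
  have a0: "\<And>i. i < K \<Longrightarrow> 0 \<le> a i \<and> a i \<le> 1"
  proof -
    fix i assume i: "i < K"
    show "0 \<le> a i \<and> a i \<le> 1" using ab[OF i] t0 by linarith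
  qed
  have a2: "\<And>i. i < K \<Longrightarrow> 0 \<le> 2 * a i \<and> 2 * a i \<le> 1"
  proof -
    fix i assume i: "i < K"
    show "0 \<le> 2 * a i \<and> 2 * a i \<le> 1" using ab[OF i] t0 by linarith
  qed
  have q: "qK K P = (\<Prod>i<K. 1 - a i)" using qK_prod[of K P] KP unfolding a_def by auto
  have r: "rK K P = (\<Prod>i<K. 1 - 2 * a i)" using rK_prod[of K P] KP unfolding a_def by auto
  define S where "S = (\<Sum>i<K. a i)"
  have Kt: "real K * t = D" unfolding t_def D_def by (simp add: power2_eq_square)
  have S_lo: "D \<le> S"
  proof -
    have "(\<Sum>i<K. t) \<le> S" unfolding S_def by (rule sum_mono) (use ab in auto)
    thus ?thesis using Kt by simp
  qed
  have S_hi: "S \<le> D / (1 - t)"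
  proof -
    have "S \<le> (\<Sum>i<K. t / (1 - t))" unfolding S_def by (rule sum_mono) (use ab in auto)
    thus ?thesis using Kt by simp
  qed
  have D0: "0 < D" unfolding D_def using K1 KP by auto
  have q_lo: "1 - S \<le> qK K P" unfolding q S_def by (rule prod_lower) (use a0 in auto)
  have q_hi: "qK K P \<le> exp (- S)"
    using prod_upper_exp[of "{..<K}" "\<lambda>i. - a i"] a0 unfolding q S_def by (simp add: sum_negf)
  have "exp (-S) \<le> 1 / (1 + S)" using expneg_le_inv[of S] S_lo D0 by simp
  hence qq: "qK K P \<le> 1 / (1 + S)" using q_hi by linarith
  have "1 - 1 / (1 + S) = S / (1 + S)" using S_lo D0 by (simp add: field_simps)
  hence "1 - qK K P \<ge> S / (1 + S)" using qq by linarith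
  moreover have "S / (1 + S) \<ge> D / (1 + D / (1 - t))"
  proof -
    have "D / (1 + D / (1 - t)) \<le> D / (1 + S)"
      using S_hi D0 S_lo by (intro divide_left_mono) auto
    also have "\<dots> \<le> S / (1 + S)" using S_lo D0 by (intro divide_right_mono) auto
    finally show ?thesis .
  qed
  ultimately show "D / (1 + D / (1 - t)) \<le> 1 - qK K P" by linarith
  show "1 - qK K P \<le> D / (1 - t)" using q_lo S_hi by linarith
  have r_lo: "1 - 2 * S \<le> rK K P"
    using prod_lower[of "{..<K}" "\<lambda>i. 2 * a i"] a2 unfolding r S_def by (simp add: sum_distrib_left)
  have r_le1: "rK K P \<le> 1" unfolding r by (rule prod_le_1) (use a2 in auto)
  define b where "b i = a i ^ 2 / (1 - 2 * a i)" for i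
  define B where "B = (\<Prod>i<K. 1 + b i)"
  define \<sigma> where "\<sigma> = (\<Sum>i<K. b i)"
  have a2s: "\<And>i. i < K \<Longrightarrow> 2 * a i < 1"
  proof -
    fix i assume i: "i < K"
    show "2 * a i < 1" using ab[OF i] t0 by linarith
  qed
  have qB: "qK K P ^ 2 = rK K P * B"
  proof -
    have "qK K P ^ 2 = (\<Prod>i<K. (1 - a i) ^ 2)" unfolding q by (simp add: prod_power_distrib)
    also have "\<dots> = (\<Prod>i<K. (1 - 2 * a i) * (1 + b i))"
    proof (rule prod.cong)
      fix i assume "i \<in> {..<K}"
      hence "1 - 2 * a i \<noteq> 0" using a2s by fastforce
      thus "(1 - a i) ^ 2 = (1 - 2 * a i) * (1 + b i)"
        unfolding b_def by (simp add: field_simps power2_eq_square)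
    qed simp
    also have "\<dots> = rK K P * B" unfolding r B_def by (simp add: prod.distrib)
    finally show ?thesis .
  qed
  have b0: "\<And>i. i < K \<Longrightarrow> 0 \<le> b i"
  proof -
    fix i assume i: "i < K"
    have "0 < 1 - 2 * a i" using a2s[OF i] by linarith
    thus "0 \<le> b i" unfolding b_def by simp
  qed
  have b_lo: "\<And>i. i < K \<Longrightarrow> t ^ 2 \<le> b i"
  proof -
    fix i assume i: "i < K"
    have "t ^ 2 \<le> a i ^ 2" using ab[OF i] t0 by (intro power_mono) auto
    also have "\<dots> \<le> a i ^ 2 / (1 - 2 * a i)"
    proof -
      have d: "0 < 1 - 2 * a i" using a2s[OF i] by linarith
      have "a i ^ 2 * (1 - 2 * a i) \<le> a i ^ 2" using a0[OF i] by (intro mult_left_le) auto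
      thus ?thesis using d by (simp add: le_divide_eq)
    qed
    finally show "t ^ 2 \<le> b i" unfolding b_def .
  qed
  have b_hi: "\<And>i. i < K \<Longrightarrow> b i \<le> t ^ 2 / ((1 - t) * (1 - 3 * t))"
  proof -
    fix i assume i: "i < K"
    have "b i \<le> (t / (1 - t)) ^ 2 / (1 - 2 * (t / (1 - t)))"
      unfolding b_def
      using ab[OF i] a0[OF i] t0 by (intro frac_le power_mono) auto
    also have "\<dots> = t ^ 2 / ((1 - t) * (1 - 3 * t))"
    proof -
      have p1: "1 - t > 0" "1 - 3 * t > 0" using t5 by auto
      have e1: "1 - 2 * (t / (1 - t)) = (1 - 3 * t) / (1 - t)" using p1 by (simp add: field_simps)
      have n: "1 - t \<noteq> 0" "1 - 3 * t \<noteq> 0" using p1 by auto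
      show ?thesis unfolding e1 using n by (simp add: divide_simps power2_eq_square)
    qed
    finally show "b i \<le> t ^ 2 / ((1 - t) * (1 - 3 * t))" .
  qed
  have Et: "E = real K * t ^ 2" unfolding E_def t_def by (simp add: power2_eq_square power3_eq_cube)
  have E0: "0 < E" using Et t0 K1 by auto
  have sig_lo: "E \<le> \<sigma>"
  proof -
    have "(\<Sum>i<K. t ^ 2) \<le> \<sigma>" unfolding \<sigma>_def by (rule sum_mono) (use b_lo in auto)
    thus ?thesis using Et by simp
  qed
  have sig_hi: "\<sigma> \<le> E * M"
  proof -
    have "\<sigma> \<le> (\<Sum>i<K. t ^ 2 / ((1 - t) * (1 - 3 * t)))" unfolding \<sigma>_def by (rule sum_mono) (use b_hi in auto)
    thus ?thesis using Et M_def by simp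
  qed
  have B_lo: "1 + \<sigma> \<le> B" unfolding B_def \<sigma>_def by (rule prod_lower_plus) (use b0 in auto)
  have B_hi: "B \<le> exp \<sigma>" unfolding B_def \<sigma>_def by (rule prod_upper_exp) (use b0 in auto)
  have s0: "0 \<le> \<sigma>" using sig_lo E0 by simp
  have s1: "\<sigma> < 1" using sig_hi EM by simp
  have "exp \<sigma> \<le> 1 / (1 - \<sigma>)" using exp_le_inv s0 s1 by simp
  hence Bx: "B \<le> 1 / (1 - \<sigma>)" using B_hi by linarith
  have "1 / (1 - \<sigma>) - 1 = \<sigma> / (1 - \<sigma>)" using s1 by (simp add: field_simps)
  hence B1: "B - 1 \<le> \<sigma> / (1 - \<sigma>)" using Bx by linarith
  have "\<sigma> / (1 - \<sigma>) \<le> E * M / (1 - E * M)"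
    using sig_hi s0 s1 EM by (intro frac_le) auto
  with B1 have B2: "B - 1 \<le> E * M / (1 - E * M)" by linarith
  have v: "qK K P ^ 2 - rK K P = rK K P * (B - 1)" using qB by (simp add: algebra_simps)
  have rpos: "0 \<le> rK K P" unfolding r by (rule prod_nonneg) (use a2 in auto)
  show "(qK K P ^ 2 - rK K P) / E \<le> M / (1 - E * M)"
  proof -
    have "rK K P * (B - 1) \<le> 1 * (E * M / (1 - E * M))"
      using r_le1 rpos B2 B_lo s0 by (intro mult_mono) auto
    hence "(qK K P ^ 2 - rK K P) / E \<le> (E * M / (1 - E * M)) / E"
      using v E0 by (intro divide_right_mono) auto
    moreover have "(E * M / (1 - E * M)) / E = M / (1 - E * M)" using E0 by simp
    ultimately show ?thesis by simp
  qed
  show "1 - 2 * (D / (1 - t)) \<le> (qK K P ^ 2 - rK K P) / E"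
  proof -
    have "rK K P * E \<le> rK K P * (B - 1)" using rpos B_lo sig_lo by (intro mult_left_mono) auto
    hence "rK K P \<le> (qK K P ^ 2 - rK K P) / E" using v E0 by (simp add: field_simps)
    thus ?thesis using r_lo S_hi by linarith
  qed
qed


lemma alg1:
  fixes u p Y Z :: real
  assumes "u \<noteq> 0" "p \<noteq> 0" "1 + Y \<noteq> 0"
  shows "(u^3 + Z * u^3) / u^2 / p / (1 + Y) = (u / p) * ((1 + Z) / (1 + Y))"
proof -
  have "u^3 + Z * u^3 = (u * (1 + Z)) * u^2" by (simp add: algebra_simps power3_eq_cube power2_eq_square)
  hence "(u^3 + Z * u^3) / u^2 = u * (1 + Z)" using assms by simp
  thus ?thesis by (simp add: times_divide_times_eq divide_divide_eq_left)
qed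

lemma alg2:
  fixes Y Z :: real
  assumes "Y \<noteq> 0" "1 + Y \<noteq> 0"
  shows "(1 + Z) / (1 + Y) = 1 + Y / (1 + Y) * (Z / Y - 1)"
proof -
  have "Y * (Z / Y - 1) = Z - Y" using assms by (simp add: right_diff_distrib)
  hence e1: "Y / (1 + Y) * (Z / Y - 1) = (Z - Y) / (1 + Y)" by (metis times_divide_eq_left)
  have e2: "1 + (Z - Y) / (1 + Y) = (1 + Z) / (1 + Y)"
  proof -
    have "1 + (Z - Y) / (1 + Y) = ((1 + Y) + (Z - Y)) / (1 + Y)" using assms by (simp add: add_divide_eq_iff)
    thus ?thesis by simp
  qed
  show ?thesis by (simp only: e1 e2)
qed

lemma alg:
  fixes q r p k P D E Y :: real
  assumes u: "1 - q \<noteq> 0" and p: "p \<noteq> 0" and k: "k > 0" and P: "P > 0"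
    and D: "D = k^2 / P" and E: "E = k^3 / P^2" and Y: "Y = P / k^3"
  shows "((1 - q)^3 + q^3 - q * r) / (1 - q)^2 / p / (1 + Y) =
     ((1 - q) / p) * (1 + Y / (1 + Y) * (q * ((q^2 - r) / E) / ((1 - q) / D)^3 - 1))"
proof -
  define u where "u = 1 - q"
  define Z where "Z = q * (q^2 - r) / u^3"
  have q: "q = 1 - u" unfolding u_def by simp
  have Y0: "Y > 0" unfolding Y using k P by simp
  have Zu: "Z * u^3 = q * (q^2 - r)" unfolding Z_def using u unfolding u_def[symmetric] by simp
  have "(1 - q)^3 + q^3 - q * r = u^3 + q * (q^2 - r)"
    unfolding u_def by (simp add: algebra_simps power3_eq_cube power2_eq_square)
  hence b: "(1 - q)^3 + q^3 - q * r = u^3 + Z * u^3" using Zu by simp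
  have c: "q * ((q^2 - r) / E) / (u / D)^3 = Z / Y"
    unfolding D E Y Z_def using k P u unfolding u_def[symmetric]
    by (simp add: field_simps power3_eq_cube power2_eq_square)
  have "((1 - q)^3 + q^3 - q * r) / (1 - q)^2 / p / (1 + Y) = (u^3 + Z * u^3) / u^2 / p / (1 + Y)"
    by (subst b) (simp add: u_def)
  also have "\<dots> = (u / p) * ((1 + Z) / (1 + Y))"
    using alg1[of u p Y Z] u p Y0 unfolding u_def by simp
  also have "\<dots> = (u / p) * (1 + Y / (1 + Y) * (Z / Y - 1))" using alg2[of Y Z] Y0 by simp
  finally show ?thesis using c unfolding u_def by simp
qed

theorem corollary3:
  fixes K P :: "nat \<Rightarrow> nat" and p :: "nat \<Rightarrow> real"
  assumes scaling: "\<And>n. 1 \<le> K n \<and> K n \<le> P n"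
    and lim: "(\<lambda>n. real (K n) ^ 2 / real (P n)) \<longlonglongrightarrow> 0"
    and p_range: "\<And>n. 0 \<le> p n \<and> p n \<le> 1"
    and p_equiv: "p \<sim>[sequentially] (\<lambda>n. 1 - qK (K n) (P n))"
  shows "(\<lambda>n. CK (K n) (P n) / p n) \<sim>[sequentially]
           (\<lambda>n. 1 + real (P n) / real (K n) ^ 3)"
proof -
  define t where "t n = real (K n) / real (P n)" for n
  define D where "D n = real (K n) ^ 2 / real (P n)" for n
  define E where "E n = real (K n) ^ 3 / real (P n) ^ 2" for n
  define M where "M n = 1 / ((1 - t n) * (1 - 3 * t n))" for n
  define u where "u n = 1 - qK (K n) (P n)" for n
  define v where "v n = qK (K n) (P n) ^ 2 - rK (K n) (P n)" for n
  define Y where "Y n = real (P n) / real (K n) ^ 3" for n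
  have Kpos: "\<And>n. real (K n) \<ge> 1"
  proof -
    fix n have "1 \<le> K n" using scaling[of n] by auto
    thus "real (K n) \<ge> 1" by simp
  qed
  have Ppos: "\<And>n. real (P n) \<ge> 1"
  proof -
    fix n have "1 \<le> P n" using scaling[of n] by auto
    thus "real (P n) \<ge> 1" by simp
  qed
  have D0: "D \<longlonglongrightarrow> 0" using lim unfolding D_def .
  have tD: "\<And>n. 0 \<le> t n \<and> t n \<le> D n"
  proof
    fix n
    show "0 \<le> t n" unfolding t_def by simp
    have "real (K n) \<le> real (K n) ^ 2" using Kpos[of n] by (simp add: power2_eq_square)
    thus "t n \<le> D n" unfolding t_def D_def using Ppos[of n] by (intro divide_right_mono) auto
  qed
  have t0: "t \<longlonglongrightarrow> 0"
    by (rule tendsto_sandwich[OF _ _ tendsto_const D0]) (use tD in auto)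
  have ED: "\<And>n. E n = D n * t n" unfolding E_def D_def t_def by (simp add: power2_eq_square power3_eq_cube)
  have E0: "E \<longlonglongrightarrow> 0" unfolding ED using tendsto_mult[OF D0 t0] by simp
  have M1: "M \<longlonglongrightarrow> 1" unfolding M_def using t0 by (auto intro!: tendsto_eq_intros)
  have EM0: "(\<lambda>n. E n * M n) \<longlonglongrightarrow> 0" using tendsto_mult[OF E0 M1] by simp
  have ev5: "eventually (\<lambda>n. 5 * K n \<le> P n) sequentially"
  proof -
    have "eventually (\<lambda>n. t n < 1/5) sequentially" using order_tendstoD(2)[OF t0, of "1/5"] by simp
    thus ?thesis
    proof eventually_elim
      case (elim n)
      hence "5 * real (K n) < real (P n)" unfolding t_def using Ppos[of n] by (simp add: field_simps)
      thus ?case by linarith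
    qed
  qed
  have evEM: "eventually (\<lambda>n. E n * M n < 1) sequentially" using order_tendstoD(2)[OF EM0, of 1] by simp
  have evpt: "eventually (\<lambda>n. D n / (1 + D n / (1 - t n)) \<le> u n \<and> u n \<le> D n / (1 - t n)
       \<and> 1 - 2 * (D n / (1 - t n)) \<le> v n / E n \<and> v n / E n \<le> M n / (1 - E n * M n)
       \<and> 5 * K n \<le> P n) sequentially"
    using ev5 evEM
  proof eventually_elim
    case (elim n)
    note pw = pointwise[of "K n" "P n" "t n" "D n" "E n" "M n", OF _ elim(1) t_def D_def E_def M_def elim(2)]
    show ?case using pw scaling[of n] elim(1) unfolding u_def v_def by auto
  qed
  have KP0: "\<And>n. real (K n) > 0 \<and> real (P n) > 0" 
  proof -
    fix n have "1 \<le> K n" "K n \<le> P n" using scaling[of n] by auto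
    thus "real (K n) > 0 \<and> real (P n) > 0" by simp
  qed
  have Dpos: "\<And>n. D n > 0" unfolding D_def using KP0 by simp
  have Epos: "\<And>n. E n > 0" unfolding E_def using KP0 by simp
  have uD: "(\<lambda>n. u n / D n) \<longlonglongrightarrow> 1"
  proof (rule tendsto_sandwich[of "\<lambda>n. 1 / (1 + D n / (1 - t n))" _ _ "\<lambda>n. 1 / (1 - t n)"])
    show "eventually (\<lambda>n. 1 / (1 + D n / (1 - t n)) \<le> u n / D n) sequentially"
      using evpt
    proof eventually_elim
      case (elim n)
      hence "D n / (1 + D n / (1 - t n)) / D n \<le> u n / D n" using Dpos[of n] by (intro divide_right_mono) auto
      thus ?case using Dpos[of n] by simp
    qed
    show "eventually (\<lambda>n. u n / D n \<le> 1 / (1 - t n)) sequentially"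
      using evpt
    proof eventually_elim
      case (elim n)
      hence "u n / D n \<le> D n / (1 - t n) / D n" using Dpos[of n] by (intro divide_right_mono) auto
      thus ?case using Dpos[of n] by simp
    qed
    have "(\<lambda>n. 1 / (1 + D n / (1 - t n))) \<longlonglongrightarrow> 1 / (1 + 0 / (1 - 0))"
      by (intro tendsto_intros D0 t0) auto
    thus "(\<lambda>n. 1 / (1 + D n / (1 - t n))) \<longlonglongrightarrow> 1" by simp
    have "(\<lambda>n. 1 / (1 - t n)) \<longlonglongrightarrow> 1 / (1 - 0)"
      by (intro tendsto_intros t0) auto
    thus "(\<lambda>n. 1 / (1 - t n)) \<longlonglongrightarrow> 1" by simp
  qed
  have vE: "(\<lambda>n. v n / E n) \<longlonglongrightarrow> 1"
  proof (rule tendsto_sandwich[of "\<lambda>n. 1 - 2 * (D n / (1 - t n))" _ _ "\<lambda>n. M n / (1 - E n * M n)"])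
    show "eventually (\<lambda>n. 1 - 2 * (D n / (1 - t n)) \<le> v n / E n) sequentially"
      using evpt by eventually_elim auto
    show "eventually (\<lambda>n. v n / E n \<le> M n / (1 - E n * M n)) sequentially"
      using evpt by eventually_elim auto
    have "(\<lambda>n. 1 - 2 * (D n / (1 - t n))) \<longlonglongrightarrow> 1 - 2 * (0 / (1 - 0))"
      by (intro tendsto_intros D0 t0) auto
    thus "(\<lambda>n. 1 - 2 * (D n / (1 - t n))) \<longlonglongrightarrow> 1" by simp
    have "(\<lambda>n. M n / (1 - E n * M n)) \<longlonglongrightarrow> 1 / (1 - 0)"
      by (intro tendsto_intros M1 EM0) auto
    thus "(\<lambda>n. M n / (1 - E n * M n)) \<longlonglongrightarrow> 1" by simp
  qed
  have u0: "u \<longlonglongrightarrow> 0"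
  proof (rule tendsto_sandwich[of "\<lambda>n. 0" _ _ "\<lambda>n. D n / (1 - t n)"])
    show "eventually (\<lambda>n. 0 \<le> u n) sequentially"
      using evpt
    proof eventually_elim
      case (elim n)
      have "t n \<le> 1/5" using elim Kpos[of n] Ppos[of n] unfolding t_def by (simp add: field_simps)
      hence "0 \<le> D n / (1 + D n / (1 - t n))" using Dpos[of n] by simp
      thus ?case using elim by linarith
    qed
    show "eventually (\<lambda>n. u n \<le> D n / (1 - t n)) sequentially" using evpt by eventually_elim auto
    have "(\<lambda>n. D n / (1 - t n)) \<longlonglongrightarrow> 0 / (1 - 0)"
      by (intro tendsto_intros D0 t0) auto
    thus "(\<lambda>n. D n / (1 - t n)) \<longlonglongrightarrow> 0" by simp
  qed simp
  have upos: "eventually (\<lambda>n. u n > 0) sequentially"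
    using evpt
  proof eventually_elim
    case (elim n)
    have "t n \<le> 1/5" using elim Kpos[of n] Ppos[of n] unfolding t_def by (simp add: field_simps)
    hence "0 < D n / (1 + D n / (1 - t n))" using Dpos[of n] by (simp add: add_pos_nonneg)
    thus ?case using elim by linarith
  qed
  have pu: "(\<lambda>n. p n / u n) \<longlonglongrightarrow> 1"
  proof -
    have "(\<lambda>n. if p n = 0 \<and> u n = 0 then 1 else p n / u n) \<longlonglongrightarrow> 1"
      using asymp_equivD[OF p_equiv] unfolding u_def .
    moreover have "eventually (\<lambda>n. (if p n = 0 \<and> u n = 0 then 1 else p n / u n) = p n / u n) sequentially"
      using upos by eventually_elim auto
    ultimately show ?thesis by (rule Lim_transform_eventually)
  qed
  define \<rho> where "\<rho> n = qK (K n) (P n) * (v n / E n) / (u n / D n) ^ 3" for n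
  define W where "W n = Y n / (1 + Y n) * (\<rho> n - 1)" for n
  have q1: "(\<lambda>n. qK (K n) (P n)) \<longlonglongrightarrow> 1"
  proof -
    have "(\<lambda>n. 1 - u n) \<longlonglongrightarrow> 1 - 0" by (intro tendsto_intros u0)
    thus ?thesis unfolding u_def by simp
  qed
  have rho1: "\<rho> \<longlonglongrightarrow> 1"
  proof -
    have "(\<lambda>n. qK (K n) (P n) * (v n / E n) / (u n / D n) ^ 3) \<longlonglongrightarrow> 1 * 1 / 1 ^ 3"
      by (intro tendsto_intros q1 vE uD) simp
    thus ?thesis unfolding \<rho>_def by simp
  qed
  have W0: "W \<longlonglongrightarrow> 0"
  proof (rule Lim_null_comparison)
    show "eventually (\<lambda>n. norm (W n) \<le> \<bar>\<rho> n - 1\<bar>) sequentially"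
    proof (rule always_eventually, rule allI)
      fix n
      have Y0: "Y n \<ge> 0" unfolding Y_def by simp
      have "Y n / (1 + Y n) \<le> 1" using Y0 by simp
      moreover have "0 \<le> Y n / (1 + Y n)" using Y0 by simp
      ultimately have a: "\<bar>Y n / (1 + Y n)\<bar> \<le> 1" by (metis abs_of_nonneg)
      have "\<bar>Y n / (1 + Y n)\<bar> * \<bar>\<rho> n - 1\<bar> \<le> 1 * \<bar>\<rho> n - 1\<bar>"
        using a by (intro mult_right_mono) auto
      thus "norm (W n) \<le> \<bar>\<rho> n - 1\<bar>" unfolding W_def real_norm_def abs_mult by simp
    qed
    have "(\<lambda>n. \<bar>\<rho> n - 1\<bar>) \<longlonglongrightarrow> \<bar>1 - 1\<bar>" by (intro tendsto_intros rho1)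
    thus "(\<lambda>n. \<bar>\<rho> n - 1\<bar>) \<longlonglongrightarrow> 0" by simp
  qed
  have up: "(\<lambda>n. u n / p n) \<longlonglongrightarrow> 1"
  proof -
    have "(\<lambda>n. inverse (p n / u n)) \<longlonglongrightarrow> inverse 1" by (intro tendsto_intros pu) simp
    thus ?thesis by simp
  qed
  have evh: "eventually (\<lambda>n. 1/2 < p n / u n) sequentially"
    using order_tendstoD(1)[OF pu, of "1/2"] by simp
  have ppos: "eventually (\<lambda>n. p n > 0) sequentially"
    using evh upos
  proof eventually_elim
    case (elim n)
    hence "p n / u n > 0" by linarith
    thus ?case using elim(2) by (simp add: zero_less_divide_iff)
  qed
  have lim1: "(\<lambda>n. (u n / p n) * (1 + W n)) \<longlonglongrightarrow> 1 * (1 + 0)" by (intro tendsto_intros up W0)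
  have eq: "eventually (\<lambda>n. CK (K n) (P n) / p n / (1 + real (P n) / real (K n) ^ 3)
        = (u n / p n) * (1 + W n)) sequentially"
    using ppos upos
  proof eventually_elim
    case (elim n)
    have "1 - qK (K n) (P n) \<noteq> 0" using elim(2) unfolding u_def by simp
    moreover have "p n \<noteq> 0" using elim(1) by simp
    ultimately show ?case
      using alg[of "qK (K n) (P n)" "p n" "real (K n)" "real (P n)" "D n" "E n" "Y n" "rK (K n) (P n)"]
        KP0[of n]
      unfolding CK_def betaK_def W_def \<rho>_def u_def v_def D_def E_def Y_def by simp
  qed
  show ?thesis
  proof (rule asymp_equivI')
    show "(\<lambda>n. CK (K n) (P n) / p n / (1 + real (P n) / real (K n) ^ 3)) \<longlonglongrightarrow> 1"
      using Lim_transform_eventually[OF lim1[simplified] eventually_mono[OF eq]] by (simp add: eq_commute)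
  qed
qed

end
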